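(* Let $H\in(\tfrac12,1)$, $W$ a one-dimensional standard Wiener process, $\tilde B_t=\int_0^t(t-v)^{H-1/2}\,dW_v$, and $R(r,s)=\mathbb{E}\tilde B_r\tilde B_s$. Set $c_1=H-\tfrac12$, $c_3=(H-\tfrac12)(H-\tfrac32)$ and $c_2=-c_3\int_0^\infty u^{H-1/2}(1+u)^{H-5/2}\,du$. Then for $0<r<s$, $$\partial^2_{r,s}R(r,s)=c_1r^{H-1/2}s^{H-3/2}+c_2(s-r)^{2H-2}+c_3\int_r^\infty v^{H-1/2}(s-r+v)^{H-5/2}\,dv.$$
   Context: $\partial^2_{r,s}R=\frac{\partial^2}{\partial r\partial s}R$ denotes the mixed derivative of the covariance function. *)

theory Defs
  imports "HOL-Analysis.Analysis"
begin

text \<open>Covariance of the Riemann-Liouville process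
  B_t = int_0^t (t-v)^(H-1/2) dW_v. By the Ito isometry,
  E[B_r B_s] = int_0^(min r s) (r-v)^(H-1/2) (s-v)^(H-1/2) dv.\<close>
definition RLcov :: "real \<Rightarrow> real \<Rightarrow> real \<Rightarrow> real" where
  "RLcov H r s = (LBINT v:{0..min r s}. (r - v) powr (H - 1/2) * (s - v) powr (H - 1/2))"

end

theory Submission
  imports Defs
begin

lemma tail_int:
  fixes a d x :: real
  assumes a: "0 < a" "a < 1/2" and d: "0 < d" and x: "0 < x"
  shows "set_integrable lborel {x..} (\<lambda>u. u powr a * (d + u) powr (a - 2))"
proof -
  have "(\<lambda>u. u powr (2*a-2)) integrable_on {x..}"
    using has_integral_powr_to_inf[of "2*a-2" x] a x by (auto simp: integrable_on_def)
  hence "(\<lambda>u. u powr (2*a-2)) absolutely_integrable_on {x..}"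
    by (intro nonnegative_absolutely_integrable_1) auto
  hence "integrable lebesgue (\<lambda>u. indicator {x..} u *\<^sub>R u powr (2*a-2))"
    by (simp add: set_integrable_def)
  hence i1: "set_integrable lborel {x..} (\<lambda>u. u powr (2*a-2))"
    unfolding set_integrable_def
    by (subst (asm) integrable_completion) measurable
  show ?thesis
  proof (rule set_integrable_bound[OF i1])
    show "set_borel_measurable lborel {x..} (\<lambda>u. u powr a * (d + u) powr (a - 2))"
      unfolding set_borel_measurable_def by measurable
    show "AE u in lborel. u \<in> {x..} \<longrightarrow> norm (u powr a * (d + u) powr (a - 2)) \<le> norm (u powr (2*a-2))"
    proof (rule AE_I2, intro impI)
      fix u assume u: "u \<in> {x..}"
      hence u0: "u > 0" using x by auto
      have "(d+u) powr (a-2) \<le> u powr (a-2)"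
        by (rule powr_mono2') (use a d u0 in auto)
      hence "u powr a * (d + u) powr (a - 2) \<le> u powr a * u powr (a-2)"
        by (intro mult_left_mono) auto
      also have "\<dots> = u powr (2*a-2)" by (simp add: powr_add[symmetric])
      finally show "norm (u powr a * (d + u) powr (a - 2)) \<le> norm (u powr (2*a-2))"
        by simp
    qed
  qed
qed

lemma scale_int:
  fixes a d :: real
  assumes d: "0 < d"
  shows "(LBINT u:{0<..}. u powr a * (d + u) powr (a - 2)) = d powr (2*a-1) * (LBINT u:{0<..}. u powr a * (1 + u) powr (a - 2))"
proof -
  have "(LBINT u:{0<..}. u powr a * (d + u) powr (a - 2)) =
     \<bar>d\<bar> *\<^sub>R (\<integral>u. indicator {0<..} (0 + d*u) *\<^sub>R ((0 + d*u) powr a * (d + (0 + d*u)) powr (a - 2)) \<partial>lborel)"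
    unfolding set_lebesgue_integral_def
    by (rule lborel_integral_real_affine) (use d in auto)
  also have "\<dots> = d * (\<integral>u. d powr (2*a-2) *\<^sub>R (indicator {0<..} u *\<^sub>R (u powr a * (1 + u) powr (a - 2))) \<partial>lborel)"
  proof -
    have "indicator {0<..} (0 + d*u) *\<^sub>R ((0 + d*u) powr a * (d + (0 + d*u)) powr (a - 2)) =
          d powr (2*a-2) *\<^sub>R (indicator {0<..} u *\<^sub>R (u powr a * (1 + u) powr (a - 2)))" for u :: real
    proof (cases "u > 0")
      case True
      have "(d*u) powr a = d powr a * u powr a" using d True by (simp add: powr_mult)
      moreover have "(d + d*u) powr (a-2) = d powr (a-2) * (1+u) powr (a-2)"
        using d True by (simp add: powr_mult[symmetric] algebra_simps)
      moreover have "d powr a * d powr (a-2) = d powr (2*a-2)" by (simp add: powr_add[symmetric])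
      ultimately show ?thesis using True d
        by (simp add: indicator_def zero_less_mult_iff)
    next
      case False
      then show ?thesis using d by (simp add: indicator_def zero_less_mult_iff)
    qed
    thus ?thesis using d by simp
  qed
  also have "\<dots> = d * d powr (2*a-2) * (LBINT u:{0<..}. u powr a * (1 + u) powr (a - 2))"
    unfolding set_lebesgue_integral_def by simp
  also have "d * d powr (2*a-2) = d powr (2*a-1)"
    using d by (simp add: powr_add[symmetric] powr_diff power2_eq_square)
  finally show ?thesis .
qed

lemma tail_identity:
  fixes a d x :: real
  assumes a: "0 < a" "a < 1/2" and d: "0 < d" and x: "0 < x"
  shows "integral {0..x} (\<lambda>u. u powr a * (d+u) powr (a-2)) =
     d powr (2*a-1) * (LBINT u:{0<..}. u powr a * (1+u) powr (a-2))
     - (LBINT u:{x<..}. u powr a * (d+u) powr (a-2))"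
proof -
  define f where "f = (\<lambda>u::real. u powr a * (d+u) powr (a-2))"
  have cf: "continuous_on {0..x} f" unfolding f_def
    using a d by (intro continuous_intros continuous_on_powr') auto
  have i1: "set_integrable lborel {0..x} f"
    by (rule borel_integrable_atLeastAtMost'[OF cf])
  have e1: "(LBINT u:{0..x}. f u) = integral {0..x} f"
    by (rule set_borel_integral_eq_integral[OF i1])
  have i2: "set_integrable lborel {x<..} f"
    using tail_int[OF a d x] unfolding f_def
    by (rule set_integrable_subset) auto
  have e2: "(LBINT u:{0..x} \<union> {x<..}. f u) = (LBINT u:{0..x}. f u) + (LBINT u:{x<..}. f u)"
    by (rule set_integral_Un[OF _ i1 i2]) auto
  have un: "{0..x} \<union> {x<..} = {0..}" using x by auto
  have e3: "(LBINT u:{0<..}. f u) = (LBINT u:{0..}. f u)"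
    unfolding set_lebesgue_integral_def
    by (rule Bochner_Integration.integral_cong) (use a in \<open>auto simp: f_def indicator_def\<close>)
  have e4: "(LBINT u:{0<..}. f u) = d powr (2*a-1) * (LBINT u:{0<..}. u powr a * (1+u) powr (a-2))"
    unfolding f_def by (rule scale_int[OF d])
  show ?thesis using e1 e2 e3 e4 un unfolding f_def[symmetric] by simp
qed

lemma RLcov_integral:
  fixes H r s :: real
  assumes "1/2 < H" "0 < r" "r \<le> s"
  shows "RLcov H r s = integral {0..r} (\<lambda>v. (r - v) powr (H - 1/2) * (s - v) powr (H - 1/2))"
proof -
  have "continuous_on {0..r} (\<lambda>v. (r - v) powr (H - 1/2) * (s - v) powr (H - 1/2))"
    using assms by (intro continuous_intros continuous_on_powr') auto
  from set_borel_integral_eq_integral(2)[OF borel_integrable_atLeastAtMost'[OF this]]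
  show ?thesis unfolding RLcov_def using assms by (simp add: min_def)
qed

lemma cont1: "0 < (a::real) \<Longrightarrow> continuous_on (U \<times> cbox 0 r) (\<lambda>p::real\<times>real. (r - snd p) powr a)"
  apply (rule continuous_on_powr'[where f="\<lambda>p. r - snd p" and g="\<lambda>p. a"]) 
  apply (intro continuous_on_diff continuous_on_const continuous_on_snd continuous_on_id)+
  apply force
  done
lemma cont2: "r < (m::real) \<Longrightarrow> U \<subseteq> {m<..} \<Longrightarrow> continuous_on (U \<times> cbox 0 r) (\<lambda>p::real\<times>real. (fst p - snd p) powr b)"
  apply (rule continuous_on_powr[where f="\<lambda>p. fst p - snd p" and g="\<lambda>p. b"]) 
  apply (intro continuous_on_diff continuous_on_const continuous_on_snd continuous_on_fst continuous_on_id)+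
  apply (auto simp: subset_iff)
  done

lemma P1:
  fixes H r s :: real
  assumes H: "1/2 < H" and r: "0 < r" "r < s"
  shows "((\<lambda>s'. RLcov H r s') has_real_derivative
     integral {0..r} (\<lambda>v. (r - v) powr (H - 1/2) * ((H - 1/2) * (s - v) powr (H - 1/2 - 1)))) (at s)"
proof -
  define a where "a = H - 1/2"
  have a: "0 < a" using H by (simp add: a_def)
  define m where "m = (r + s)/2"
  have m: "r < m" "m < s" using r by (auto simp: m_def)
  let ?U = "{m<..}"
  have dd: "((\<lambda>x. integral (cbox 0 r) (\<lambda>v. (r - v) powr a * (x - v) powr a)) has_field_derivative
      integral (cbox 0 r) (\<lambda>v. (r - v) powr a * (a * (s - v) powr (a - 1)))) (at s within ?U)"
  proof (rule leibniz_rule_field_derivative)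
    fix x t assume x: "x \<in> ?U" and t: "t \<in> cbox 0 r"
    have "x - t > 0" using x t m by auto
    thus "((\<lambda>x. (r - t) powr a * (x - t) powr a) has_field_derivative (r - t) powr a * (a * (x - t) powr (a - 1))) (at x within ?U)"
      by (auto intro!: derivative_eq_intros)
  next
    fix x assume x: "x \<in> ?U"
    have "continuous_on {0..r} (\<lambda>v. (r - v) powr a * (x - v) powr a)"
      using a x m by (intro continuous_intros continuous_on_powr') auto
    thus "(\<lambda>v. (r - v) powr a * (x - v) powr a) integrable_on cbox 0 r"
      by (simp add: integrable_continuous_real)
  next
    show "continuous_on (?U \<times> cbox 0 r) (\<lambda>(x, t). (r - t) powr a * (a * (x - t) powr (a - 1)))"
    proof -
      have c1: "continuous_on (?U \<times> cbox 0 r) (\<lambda>p::real\<times>real. (r - snd p) powr a)"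
        using a by (rule cont1)
      have c2: "continuous_on (?U \<times> cbox 0 r) (\<lambda>p::real\<times>real. (fst p - snd p) powr (a - 1))"
        using m by (intro cont2) auto
      have "continuous_on (?U \<times> cbox 0 r) (\<lambda>p::real\<times>real. (r - snd p) powr a * (a * (fst p - snd p) powr (a - 1)))"
        by (intro continuous_on_mult c1 c2 continuous_on_const)
      thus ?thesis unfolding case_prod_beta .
    qed
  qed (use m in simp)+
  have e: "at s within ?U = at s" using m by (intro at_within_open) auto
  note d1 = dd[unfolded e cbox_interval]
  show ?thesis
    unfolding a_def[symmetric]
  proof (rule has_field_derivative_transform_within_open[OF d1, of ?U])
    fix z assume "z \<in> ?U"
    thus "integral {0..r} (\<lambda>v. (r - v) powr a * (z - v) powr a) = RLcov H r z"
      using RLcov_integral[of H r z] H r m by (simp add: a_def)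
  qed (use m in simp)+
qed

lemma flip_integral:
  fixes f :: "real \<Rightarrow> real"
  assumes "f integrable_on {0..x}" "0 \<le> x"
  shows "integral {0..x} (\<lambda>w. f (x - w)) = integral {0..x} f"
proof -
  have h: "(f has_integral integral {0..x} f) (cbox 0 x)"
    using assms by (simp add: cbox_interval has_integral_integral)
  have im: "(\<lambda>y. (1 / (-1::real)) *\<^sub>R y + - ((1 / (-1)) *\<^sub>R x)) ` cbox 0 x = {0..x}"
  proof
    show "(\<lambda>y. (1 / (-1::real)) *\<^sub>R y + - ((1 / (-1)) *\<^sub>R x)) ` cbox 0 x \<subseteq> {0..x}"
      by (auto simp: cbox_interval)
    show "{0..x} \<subseteq> (\<lambda>y. (1 / (-1::real)) *\<^sub>R y + - ((1 / (-1)) *\<^sub>R x)) ` cbox 0 x"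
    proof
      fix z assume z: "z \<in> {0..x}"
      show "z \<in> (\<lambda>y. (1 / (-1::real)) *\<^sub>R y + - ((1 / (-1)) *\<^sub>R x)) ` cbox 0 x"
        by (rule image_eqI[where x="x - z"]) (use z in \<open>auto simp: cbox_interval\<close>)
    qed
  qed
  from has_integral_affinity[OF h, of "-1" x] im
  have "((\<lambda>w. f (x - w)) has_integral integral {0..x} f) {0..x}"
    by simp
  thus ?thesis by (rule integral_unique)
qed

lemma scale01:
  fixes f :: "real \<Rightarrow> real"
  assumes "continuous_on {0..x} f" "0 < x"
  shows "integral {0..1} (\<lambda>t. x * f (x * t)) = integral {0..x} f"
proof -
  have "((\<lambda>t. x *\<^sub>R f (x * t)) has_integral integral {x * 0..x * 1} f) {0..1}"
  proof (rule has_integral_substitution[where c=0 and d=x])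
    show "(\<lambda>t. x * t) ` {0..1} \<subseteq> {0..x}" using assms(2)
      by (auto simp: mult_le_cancel_left1)
    fix t assume "t \<in> {0..1::real}"
    show "((\<lambda>t. x * t) has_real_derivative x) (at t within {0..1})"
      by (auto intro!: derivative_eq_intros)
  qed (use assms in auto)
  hence "((\<lambda>t. x * f (x * t)) has_integral integral {0..x} f) {0..1}" by simp
  from integral_unique[OF this] show ?thesis .
qed

lemma DA:
  fixes a x s :: real
  assumes a: "0 < a" and x: "0 < x" "x < s"
  shows "integral {0..x} (\<lambda>v. (x - v) powr a * (a * (s - v) powr (a - 1))) =
     a * integral {0..1} (\<lambda>t. x powr (a+1) * (1-t) powr a * (s - x*t) powr (a-1))"
proof -
  have cF: "continuous_on {0..x} (\<lambda>v. (x-v) powr a * (s-v) powr (a-1))"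
    using a x by (intro continuous_intros continuous_on_powr') auto
  have "(\<lambda>v. (x - v) powr a * (a * (s - v) powr (a - 1))) = (\<lambda>v. a * ((x-v) powr a * (s-v) powr (a-1)))"
    by (auto simp: fun_eq_iff)
  hence "integral {0..x} (\<lambda>v. (x - v) powr a * (a * (s - v) powr (a - 1))) =
      a * integral {0..x} (\<lambda>v. (x-v) powr a * (s-v) powr (a-1))" by simp
  also have "integral {0..x} (\<lambda>v. (x-v) powr a * (s-v) powr (a-1)) =
      integral {0..1} (\<lambda>t. x * ((x - x*t) powr a * (s - x*t) powr (a-1)))"
    using scale01[OF cF x(1)] by simp
  also have "\<dots> = integral {0..1} (\<lambda>t. x powr (a+1) * (1-t) powr a * (s - x*t) powr (a-1))"
  proof (rule integral_cong)
    fix t :: real assume t: "t \<in> {0..1}"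
    have "(x - x*t) powr a = x powr a * (1-t) powr a"
      using x t by (simp add: powr_mult[symmetric] algebra_simps)
    moreover have "x powr (a+1) = x powr a * x" using x by (simp add: powr_add)
    ultimately show "x * ((x - x*t) powr a * (s - x*t) powr (a-1)) = x powr (a+1) * (1-t) powr a * (s - x*t) powr (a-1)"
      by simp
  qed
  finally show ?thesis .
qed

lemma contA: "U \<subseteq> {0<..} \<Longrightarrow> continuous_on (U \<times> S) (\<lambda>p::real\<times>real. fst p powr b)"
  apply (rule continuous_on_powr[where f="\<lambda>p. fst p" and g="\<lambda>p. b"])
  apply (intro continuous_on_const continuous_on_fst continuous_on_id)+
  apply auto
  done
lemma contB: "0 < (a::real) \<Longrightarrow> continuous_on (U \<times> cbox 0 1) (\<lambda>p::real\<times>real. (1 - snd p) powr a)"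
  apply (rule continuous_on_powr'[where f="\<lambda>p. 1 - snd p" and g="\<lambda>p. a"])
  apply (intro continuous_on_diff continuous_on_const continuous_on_snd continuous_on_id)+
  apply auto
  done
lemma contC: "U \<subseteq> {0<..<s} \<Longrightarrow> continuous_on (U \<times> cbox 0 1) (\<lambda>p::real\<times>real. (s - fst p * snd p) powr b)"
  apply (rule continuous_on_powr[where f="\<lambda>p. s - fst p * snd p" and g="\<lambda>p. b"])
  apply (intro continuous_on_diff continuous_on_mult continuous_on_const continuous_on_snd continuous_on_fst continuous_on_id)+
  apply (auto simp: subset_iff)
  done
lemma contD: "continuous_on (U \<times> S) (\<lambda>p::real\<times>real. snd p)"
  by (intro continuous_on_snd continuous_on_id)

lemma DB:
  fixes a r s :: real
  assumes a: "0 < a" and r: "0 < r" "r < s"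
  shows "((\<lambda>x. integral {0..1} (\<lambda>t. x powr (a+1) * (1-t) powr a * (s - x*t) powr (a-1))) has_real_derivative
     integral {0..1} (\<lambda>t. (a+1) * r powr a * (1-t) powr a * (s-r*t) powr (a-1)
        - (a-1) * t * r powr (a+1) * (1-t) powr a * (s-r*t) powr (a-2))) (at r)"
proof -
  let ?U = "{r/2<..<s}"
  have dd: "((\<lambda>x. integral (cbox 0 1) (\<lambda>t. x powr (a+1) * (1-t) powr a * (s - x*t) powr (a-1))) has_field_derivative
     integral (cbox 0 1) (\<lambda>t. (a+1) * r powr a * (1-t) powr a * (s-r*t) powr (a-1)
        - (a-1) * t * r powr (a+1) * (1-t) powr a * (s-r*t) powr (a-2))) (at r within ?U)"
  proof (rule leibniz_rule_field_derivative)
    fix x t assume x: "x \<in> ?U" and t: "t \<in> cbox (0::real) 1"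
    have x0: "x > 0" using x r by auto
    have st: "s - x*t > 0"
    proof -
      have "x * t \<le> x" using x0 t by (auto simp: cbox_interval mult_le_cancel_left1)
      thus ?thesis using x by auto
    qed
    have d1: "((\<lambda>x. x powr (a+1)) has_real_derivative (a+1) * x powr a) (at x)"
      using has_real_derivative_powr[OF x0, of "a+1"] by simp
    have d2: "((\<lambda>x. (s - x*t) powr (a-1)) has_real_derivative (a-1) * (s - x*t) powr (a-2) * (-t)) (at x)"
    proof -
      have "((\<lambda>x. s - x*t) has_real_derivative -t) (at x)"
        by (auto intro!: derivative_eq_intros)
      from DERIV_fun_powr[OF this st, of "a-1"] show ?thesis by simp
    qed
    have "((\<lambda>x. x powr (a+1) * (1-t) powr a * (s - x*t) powr (a-1)) has_real_derivative
       ((a+1) * x powr a * (1-t) powr a) * (s - x*t) powr (a-1) + (x powr (a+1) * (1-t) powr a) * ((a-1) * (s - x*t) powr (a-2) * (-t))) (at x)"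
      using DERIV_mult[OF DERIV_cmult_right[OF d1, of "(1-t) powr a"] d2] by (simp add: mult_ac)
    hence "((\<lambda>x. x powr (a+1) * (1-t) powr a * (s - x*t) powr (a-1)) has_real_derivative
       (a+1) * x powr a * (1-t) powr a * (s-x*t) powr (a-1)
        - (a-1) * t * x powr (a+1) * (1-t) powr a * (s-x*t) powr (a-2)) (at x)"
      by (rule DERIV_cong) (simp add: algebra_simps)
    thus "((\<lambda>x. x powr (a+1) * (1-t) powr a * (s - x*t) powr (a-1)) has_real_derivative
       (a+1) * x powr a * (1-t) powr a * (s-x*t) powr (a-1)
        - (a-1) * t * x powr (a+1) * (1-t) powr a * (s-x*t) powr (a-2)) (at x within ?U)"
      by (rule has_field_derivative_at_within)
  next
    fix x assume x: "x \<in> ?U"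
    have "continuous_on {0..1} (\<lambda>t. x powr (a+1) * (1-t) powr a * (s - x*t) powr (a-1))"
    proof -
      have "continuous_on ({x} \<times> cbox 0 1) (\<lambda>p::real\<times>real. fst p powr (a+1) * (1 - snd p) powr a * (s - fst p * snd p) powr (a-1))"
        using x r by (intro continuous_on_mult contA contB contC a) auto
      hence csub: "continuous_on ((\<lambda>t. (x, t)) ` {0..1}) (\<lambda>p::real\<times>real. fst p powr (a+1) * (1 - snd p) powr a * (s - fst p * snd p) powr (a-1))"
        by (rule continuous_on_subset) (auto simp: cbox_interval)
      have cp: "continuous_on {0..1} (\<lambda>t::real. (x,t))"
        by (intro continuous_on_Pair continuous_on_const continuous_on_id)
      from continuous_on_compose[OF cp csub]
      show ?thesis by (simp add: o_def)
    qed
    thus "(\<lambda>t. x powr (a+1) * (1-t) powr a * (s - x*t) powr (a-1)) integrable_on cbox 0 1"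
      by (simp add: integrable_continuous_real cbox_interval)
  next
    have "continuous_on (?U \<times> cbox 0 1) (\<lambda>p::real\<times>real. (a+1) * fst p powr a * (1 - snd p) powr a * (s - fst p * snd p) powr (a-1)
        - (a-1) * snd p * fst p powr (a+1) * (1 - snd p) powr a * (s - fst p * snd p) powr (a-2))"
      using r by (intro continuous_on_mult continuous_on_diff continuous_on_const contA contB contC contD a) auto
    thus "continuous_on (?U \<times> cbox 0 1) (\<lambda>(x, t). (a+1) * x powr a * (1-t) powr a * (s-x*t) powr (a-1)
        - (a-1) * t * x powr (a+1) * (1-t) powr a * (s-x*t) powr (a-2))"
      unfolding case_prod_beta .
  next
    show "r \<in> ?U" using r by simp
  next
    show "convex ?U" by simp
  qed
  have e: "at r within ?U = at r" using r by (intro at_within_open) auto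
  show ?thesis using dd[unfolded e cbox_interval] .
qed


lemma cont1d: "0 < (b::real) \<Longrightarrow> continuous_on {0..1} (\<lambda>t::real. (1 - t) powr b)"
  apply (rule continuous_on_powr'[where f="\<lambda>t. 1 - t" and g="\<lambda>t. b"])
  apply (intro continuous_on_diff continuous_on_const continuous_on_id)+
  apply auto
  done
lemma cont2d: "0 < (r::real) \<Longrightarrow> r < s \<Longrightarrow> continuous_on {0..1} (\<lambda>t::real. (s - r * t) powr b)"
  apply (rule continuous_on_powr[where f="\<lambda>t. s - r * t" and g="\<lambda>t. b"])
  apply (intro continuous_on_diff continuous_on_mult continuous_on_const continuous_on_id)+
  apply auto
  done

lemma DC:
  fixes a r s :: real
  assumes a: "0 < a" and r: "0 < r" "r < s"
  shows "integral {0..1} (\<lambda>t. (a+1) * r powr a * (1-t) powr a * (s-r*t) powr (a-1)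
        - (a-1) * t * r powr (a+1) * (1-t) powr a * (s-r*t) powr (a-2))
    = r powr a * s powr (a-1) - (a-1) * integral {0..1} (\<lambda>t. r powr (a+1) * (1-t) powr a * (s - r*t) powr (a-2))"
proof -
  define \<Phi> where "\<Phi> = (\<lambda>t::real. - ((1-t) powr (a+1) * (s - r*t) powr (a-1)))"
  define \<Phi>' where "\<Phi>' = (\<lambda>t::real. (a+1) * (1-t) powr a * (s-r*t) powr (a-1) + (a-1) * r * (1-t) powr (a+1) * (s-r*t) powr (a-2))"
  define q where "q = (\<lambda>t::real. r powr (a+1) * (1-t) powr a * (s - r*t) powr (a-2))"
  have pos: "s - r*t > 0" if "t \<le> 1" for t
  proof -
    have "r * t \<le> r" using r that by (simp add: mult_le_cancel_left1)
    thus ?thesis using r by linarith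
  qed
  have "(\<Phi>' has_integral (\<Phi> 1 - \<Phi> 0)) {0..1}"
  proof (rule fundamental_theorem_of_calculus_interior)
    show "continuous_on {0..1} \<Phi>" unfolding \<Phi>_def
      using a r by (intro continuous_on_minus continuous_on_mult cont1d cont2d) auto
  next
    fix t :: real assume t: "t \<in> {0<..<1}"
    have p1: "1 - t > 0" using t by auto
    have p2: "s - r*t > 0" using pos t by auto
    have d1: "((\<lambda>t. (1-t) powr (a+1)) has_real_derivative (a+1) * (1-t) powr a * (-1)) (at t)"
    proof -
      have "((\<lambda>t. 1 - t) has_real_derivative -1) (at t)" by (auto intro!: derivative_eq_intros)
      from DERIV_fun_powr[OF this p1, of "a+1"] show ?thesis by simp
    qed
    have d2: "((\<lambda>t. (s - r*t) powr (a-1)) has_real_derivative (a-1) * (s-r*t) powr (a-2) * (-r)) (at t)"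
    proof -
      have "((\<lambda>t. s - r*t) has_real_derivative -r) (at t)" by (auto intro!: derivative_eq_intros)
      from DERIV_fun_powr[OF this p2, of "a-1"] show ?thesis by simp
    qed
    have "(\<Phi> has_real_derivative \<Phi>' t) (at t)"
      unfolding \<Phi>_def using DERIV_minus[OF DERIV_mult[OF d1 d2]]
      by (rule DERIV_cong) (simp add: \<Phi>'_def algebra_simps)
    thus "(\<Phi> has_vector_derivative \<Phi>' t) (at t)"
      by (simp add: has_real_derivative_iff_has_vector_derivative)
  qed simp
  moreover have "\<Phi> 1 - \<Phi> 0 = s powr (a-1)" using a by (simp add: \<Phi>_def)
  ultimately have hF: "(\<Phi>' has_integral s powr (a-1)) {0..1}" by simp
  have h1: "((\<lambda>t. r powr a * \<Phi>' t) has_integral r powr a * s powr (a-1)) {0..1}"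
    by (rule has_integral_mult_right[OF hF])
  have cq: "continuous_on {0..1} q" unfolding q_def
    using a r by (intro continuous_on_mult continuous_on_const cont1d cont2d) auto
  have h2: "((\<lambda>t. (a-1) * q t) has_integral (a-1) * integral {0..1} q) {0..1}"
    by (intro has_integral_mult_right integrable_integral integrable_continuous_real cq)
  have h3: "((\<lambda>t. r powr a * \<Phi>' t - (a-1) * q t) has_integral r powr a * s powr (a-1) - (a-1) * integral {0..1} q) {0..1}"
    by (rule has_integral_diff[OF h1 h2])
  have eq: "(a+1) * r powr a * (1-t) powr a * (s-r*t) powr (a-1)
        - (a-1) * t * r powr (a+1) * (1-t) powr a * (s-r*t) powr (a-2) = r powr a * \<Phi>' t - (a-1) * q t"
    if t: "t \<in> {0..1}" for t
  proof -
    have e1: "(1-t) powr (a+1) = (1-t) powr a * (1-t)" using t by (simp add: powr_add)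
    have e2: "r powr (a+1) = r powr a * r" using r by (simp add: powr_add)
    show ?thesis unfolding \<Phi>'_def q_def e1 e2 by (simp add: algebra_simps)
  qed
  have "integral {0..1} (\<lambda>t. (a+1) * r powr a * (1-t) powr a * (s-r*t) powr (a-1)
        - (a-1) * t * r powr (a+1) * (1-t) powr a * (s-r*t) powr (a-2)) =
     integral {0..1} (\<lambda>t. r powr a * \<Phi>' t - (a-1) * q t)"
    by (rule integral_cong) (rule eq)
  also have "\<dots> = r powr a * s powr (a-1) - (a-1) * integral {0..1} q"
    by (rule integral_unique[OF h3])
  finally show ?thesis unfolding q_def .
qed

lemma DD:
  fixes a r s :: real
  assumes a: "0 < a" and r: "0 < r" "r < s"
  shows "integral {0..1} (\<lambda>t. r powr (a+1) * (1-t) powr a * (s - r*t) powr (a-2))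
     = integral {0..r} (\<lambda>u. u powr a * (s - r + u) powr (a-2))"
proof -
  define G where "G = (\<lambda>w::real. (r - w) powr a * (s - w) powr (a-2))"
  have cG: "continuous_on {0..r} G" unfolding G_def
    using a r by (intro continuous_intros continuous_on_powr') auto
  have "integral {0..1} (\<lambda>t. r powr (a+1) * (1-t) powr a * (s - r*t) powr (a-2))
      = integral {0..1} (\<lambda>t. r * G (r * t))"
  proof (rule integral_cong)
    fix t :: real assume t: "t \<in> {0..1}"
    have "(r - r*t) powr a = r powr a * (1-t) powr a"
      using r t by (simp add: powr_mult[symmetric] algebra_simps)
    moreover have "r powr (a+1) = r powr a * r" using r by (simp add: powr_add)
    ultimately show "r powr (a+1) * (1-t) powr a * (s - r*t) powr (a-2) = r * G (r * t)"
      by (simp add: G_def)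
  qed
  also have "\<dots> = integral {0..r} G" by (rule scale01[OF cG r(1)])
  also have "\<dots> = integral {0..r} (\<lambda>w. (\<lambda>u. u powr a * (s - r + u) powr (a-2)) (r - w))"
    by (rule integral_cong) (simp add: G_def)
  also have "\<dots> = integral {0..r} (\<lambda>u. u powr a * (s - r + u) powr (a-2))"
  proof (rule flip_integral)
    have "continuous_on {0..r} (\<lambda>u. u powr a * (s - r + u) powr (a-2))"
      using a r by (intro continuous_intros continuous_on_powr') auto
    thus "(\<lambda>u. u powr a * (s - r + u) powr (a-2)) integrable_on {0..r}"
      by (rule integrable_continuous_real)
  qed (use r in simp)
  finally show ?thesis .
qed


theorem lemmaA1:
  fixes H r s c1 c2 c3 :: real
  assumes "1/2 < H" "H < 1"
    and "c1 = H - 1/2"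
    and "c3 = (H - 1/2) * (H - 3/2)"
    and "c2 = - c3 * (LBINT u:{0<..}. u powr (H - 1/2) * (1 + u) powr (H - 5/2))"
    and "0 < r" "r < s"
  shows "(\<forall>\<^sub>F r' in nhds r. (\<lambda>s'. RLcov H r' s') differentiable (at s))
    \<and> ((\<lambda>r'. deriv (\<lambda>s'. RLcov H r' s') s) has_real_derivative
         (c1 * r powr (H - 1/2) * s powr (H - 3/2) + c2 * (s - r) powr (2*H - 2)
          + c3 * (LBINT v:{r<..}. v powr (H - 1/2) * (s - r + v) powr (H - 5/2)))) (at r)"
proof -
  define a where "a = H - 1/2"
  have a: "0 < a" "a < 1/2" using assms(1,2) by (auto simp: a_def)
  have r: "0 < r" "r < s" using assms(6,7) by auto
  have P1': "((\<lambda>s'. RLcov H x s') has_real_derivative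
      integral {0..x} (\<lambda>v. (x - v) powr a * (a * (s - v) powr (a - 1)))) (at s)"
    if "x \<in> {0<..<s}" for x
    using P1[OF assms(1), of x s] that unfolding a_def by simp
  have part1: "\<forall>\<^sub>F r' in nhds r. (\<lambda>s'. RLcov H r' s') differentiable (at s)"
  proof -
    have "\<forall>\<^sub>F r' in nhds r. r' \<in> {0<..<s}"
      using r by (intro eventually_nhds_in_open) auto
    thus ?thesis
    proof eventually_elim
      case (elim x)
      from P1'[OF elim] show ?case
        unfolding has_field_derivative_def by (rule differentiableI)
    qed
  qed
  define I where "I = (\<lambda>x. integral {0..1} (\<lambda>t. x powr (a+1) * (1-t) powr a * (s - x*t) powr (a-1)))"
  define J where "J = integral {0..1} (\<lambda>t. (a+1) * r powr a * (1-t) powr a * (s-r*t) powr (a-1)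
        - (a-1) * t * r powr (a+1) * (1-t) powr a * (s-r*t) powr (a-2))"
  have eqD: "a * I x = deriv (\<lambda>s'. RLcov H x s') s" if "x \<in> {0<..<s}" for x
    using DERIV_imp_deriv[OF P1'[OF that]] DA[OF a(1), of x s] that unfolding I_def by simp
  have dI: "((\<lambda>x. a * I x) has_real_derivative a * J) (at r)"
    unfolding I_def J_def by (intro DERIV_cmult DB a(1) r)
  have d2: "((\<lambda>r'. deriv (\<lambda>s'. RLcov H r' s') s) has_real_derivative a * J) (at r)"
    by (rule has_field_derivative_transform_within_open[OF dI, of "{0<..<s}"]) (use r eqD in auto)
  define K where "K = (LBINT u:{0<..}. u powr a * (1 + u) powr (a - 2))"
  define L where "L = (LBINT v:{r<..}. v powr a * (s - r + v) powr (a - 2))"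
  have TI: "integral {0..r} (\<lambda>u. u powr a * (s - r + u) powr (a - 2)) = (s - r) powr (2*a-1) * K - L"
    unfolding K_def L_def using tail_identity[of a "s - r" r] a r by simp
  have JJ: "J = r powr a * s powr (a-1) - (a-1) * ((s - r) powr (2*a-1) * K - L)"
    unfolding J_def DC[OF a(1) r] DD[OF a(1) r] TI ..
  have e1: "H - 1/2 = a" "H - 3/2 = a - 1" "H - 5/2 = a - 2" "2*H - 2 = 2*a - 1"
    by (auto simp: a_def)
  have "c1 * r powr (H - 1/2) * s powr (H - 3/2) + c2 * (s - r) powr (2*H - 2)
          + c3 * (LBINT v:{r<..}. v powr (H - 1/2) * (s - r + v) powr (H - 5/2)) = a * J"
    unfolding JJ e1 assms(3,4,5) K_def[symmetric] L_def[symmetric]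
    by (simp add: algebra_simps)
  with part1 d2 show ?thesis by simp
qed

end
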